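(* Let $(\mathcal D,\mathcal C)$ be a $\mathtt{CGTPDL}$ proof. Then for every sequent $\Gamma\Rightarrow\Delta$ occurring in the derivation tree $\mathcal D$ and every model $M$, $M\models\Gamma\Rightarrow\Delta$.
   Context: Fix sets $\mathsf{Prop}$ and $\mathsf{AtProg}$. $\mathtt{TPDL}$ formulas/programs: $\varphi ::= \bot \mid p \mid (\varphi\to\varphi) \mid [\pi]\varphi \mid [\pi]^{\leftarrow}\varphi$, $\pi ::= \alpha \mid \pi;\pi \mid \pi\cup\pi \mid \pi^{*} \mid \varphi?$. $[\pi]\Gamma=\{[\pi]\varphi:\varphi\in\Gamma\}$, similarly $[\pi]^{\leftarrow}\Gamma$. Model $M=(W,(R_\alpha),V)$, $W\neq\emptyset$; $R_{\pi_0;\pi_1}$ composition, $R_{\pi_0\cup\pi_1}$ union, $R_{\pi^*}$ reflexive–transitive closure, $R_{\psi?}=\{(w,w):M,w\models\psi\}$; $M,w\models p$ iff $p\in V(w)$, $\bot$ false, $\to$ classical, $[\pi]\varphi$ true at $w$ iff $\varphi$ true at all $R_\pi$-successors, $[\pi]^{\leftarrow}\varphi$ true at $w$ iff $\varphi$ true at all $R_\pi$-predecessors. Sequents are pairs of finite sets of formulas; $M\models\Gamma\Rightarrow\Delta$ means at every state where all of $\Gamma$ hold some formula of $\Delta$ holds. $\mathtt{CGTPDL}$ rules (premises / conclusion): (Ax) / $\Gamma\Rightarrow\Delta$, $\Gamma\cap\Delta\neq\emptyset$; ($\bot$) / $\Gamma,\bot\Rightarrow\Delta$; ($\to$L) $\Gamma\Rightarrow\varphi,\Delta$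 and $\Gamma,\psi\Rightarrow\Delta$ / $\Gamma,\varphi\to\psi\Rightarrow\Delta$; ($\to$R) $\Gamma,\varphi\Rightarrow\psi,\Delta$ / $\Gamma\Rightarrow\varphi\to\psi,\Delta$; (Wk) $\Gamma\Rightarrow\Delta$ / $\Gamma'\Rightarrow\Delta'$, $\Gamma\subseteq\Gamma'$, $\Delta\subseteq\Delta'$; (Cut) $\Gamma\Rightarrow\varphi,\Delta$ and $\Gamma,\varphi\Rightarrow\Delta$ / $\Gamma\Rightarrow\Delta$; ($[\,]$) $\Gamma\Rightarrow\varphi,[\pi]^{\leftarrow}\Delta$ / $[\pi]\Gamma\Rightarrow[\pi]\varphi,\Delta$; ($[\,]^{\leftarrow}$) $\Gamma\Rightarrow\varphi,[\pi]\Delta$ / $[\pi]^{\leftarrow}\Gamma\Rightarrow[\pi]^{\leftarrow}\varphi,\Delta$; ($[;]$L) $\Gamma,[\pi_0][\pi_1]\varphi\Rightarrow\Delta$ / $\Gamma,[\pi_0;\pi_1]\varphi\Rightarrow\Delta$; ($[;]$R) $\Gamma\Rightarrow[\pi_0][\pi_1]\varphi,\Delta$ / $\Gamma\Rightarrow[\pi_0;\pi_1]\varphi,\Delta$; ($[\cup]$L) $\Gamma,[\pi_0]\varphi,[\pi_1]\varphi\Rightarrow\Delta$ / $\Gamma,[\pi_0\cup\pi_1]\varphi\Rightarrow\Delta$; ($[\cup]$R) $\Gamma\Rightarrow\Delta,[\pi_0]\varphi$ and $\Gamma\Rightarrow\Delta,[\pi_1]\varphi$ / $\Gamma\Rightarrow[\pi_0\cup\pi_1]\varphi,\Delta$;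 ($[*]$L) $\Gamma,\varphi,[\pi][\pi^*]\varphi\Rightarrow\Delta$ / $\Gamma,[\pi^*]\varphi\Rightarrow\Delta$; ($[?]$L) $\Gamma\Rightarrow\varphi,\Delta$ and $\Gamma,\psi\Rightarrow\Delta$ / $\Gamma,[\varphi?]\psi\Rightarrow\Delta$; ($[?]$R) $\Gamma,\varphi\Rightarrow\psi,\Delta$ / $\Gamma\Rightarrow[\varphi?]\psi,\Delta$; (C-s) $\Gamma\Rightarrow\varphi,\Delta$ and $\Gamma\Rightarrow[\pi][\pi^*]\varphi,\Delta$ / $\Gamma\Rightarrow[\pi^*]\varphi,\Delta$. A pre-proof $(\mathcal D,\mathcal C)$: $\mathcal D$ a finite tree of sequents built of rule instances whose leaves are Ax/$\bot$ instances or buds; $\mathcal C$ assigns each bud a companion, an inner node with the same sequent. The derivation graph identifies buds with companions; a path is a sequence of nodes each a premise of the previous one's rule instance. A trace following a path $(\Gamma_i\Rightarrow\Delta_i)$ is $(\tau_i)$ with $\tau_i\in\Delta_i$ such that: at ($\to$R), ($[;]$R), ($[\cup]$R), ($[?]$R), (C-s) either $\tau_{i+1}=\tau_i$, or $\tau_i$ is the principal formula and $\tau_{i+1}$ is its immediate component in the chosen premise (respectively $\psi$ for $\varphi\to\psi$; $[\pi_0][\pi_1]\varphi$; $[\pi_j]\varphi$ for the premise containing it; $\psi$ for $[\varphi?]\psi$; $\varphi$ or $[\pi][\pi^*]\varphi$ for $[\pi^*]\varphi$, the latter being a progress point); at ($[\,]$) and ($[\,]^{\leftarrow}$), $\tau_i$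 is the principal formula $[\pi]\varphi$ resp. $[\pi]^{\leftarrow}\varphi$ and $\tau_{i+1}=\varphi$; at all other rules $\tau_{i+1}=\tau_i$. The global trace condition requires every infinite path to have a tail followed by a trace with infinitely many progress points. A $\mathtt{CGTPDL}$ proof is a pre-proof whose derivation graph satisfies the global trace condition. *)

theory Defs
  imports Main "HOL-Library.Infinite_Set"
begin

datatype ('p,'a) fm =
    Bot
  | Atom 'p
  | Imp "('p,'a) fm" "('p,'a) fm"
  | Box "('p,'a) prog" "('p,'a) fm"
  | BoxC "('p,'a) prog" "('p,'a) fm"
and ('p,'a) prog =
    At 'a
  | Seq "('p,'a) prog" "('p,'a) prog"
  | Choice "('p,'a) prog" "('p,'a) prog"
  | Star "('p,'a) prog"
  | Test "('p,'a) fm"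

fun sat :: "('a \<Rightarrow> ('w \<times> 'w) set) \<Rightarrow> ('w \<Rightarrow> 'p set) \<Rightarrow> 'w \<Rightarrow> ('p,'a) fm \<Rightarrow> bool"
and rel :: "('a \<Rightarrow> ('w \<times> 'w) set) \<Rightarrow> ('w \<Rightarrow> 'p set) \<Rightarrow> ('p,'a) prog \<Rightarrow> ('w \<times> 'w) set"
where
  "sat R V w Bot = False"
| "sat R V w (Atom p) = (p \<in> V w)"
| "sat R V w (Imp \<phi> \<psi>) = (sat R V w \<phi> \<longrightarrow> sat R V w \<psi>)"
| "sat R V w (Box \<pi> \<phi>) = (\<forall>v. (w, v) \<in> rel R V \<pi> \<longrightarrow> sat R V v \<phi>)"
| "sat R V w (BoxC \<pi> \<phi>) = (\<forall>v. (v, w) \<in> rel R V \<pi> \<longrightarrow> sat R V v \<phi>)"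
| "rel R V (At \<alpha>) = R \<alpha>"
| "rel R V (Seq \<pi>0 \<pi>1) = rel R V \<pi>0 O rel R V \<pi>1"
| "rel R V (Choice \<pi>0 \<pi>1) = rel R V \<pi>0 \<union> rel R V \<pi>1"
| "rel R V (Star \<pi>) = (rel R V \<pi>)\<^sup>*"
| "rel R V (Test \<phi>) = {(w, w) | w. sat R V w \<phi>}"

type_synonym ('p,'a) sequent = "('p,'a) fm set \<times> ('p,'a) fm set"

definition valid_seq :: "('a \<Rightarrow> ('w \<times> 'w) set) \<Rightarrow> ('w \<Rightarrow> 'p set) \<Rightarrow> ('p,'a) sequent \<Rightarrow> bool" where
  "valid_seq R V S \<longleftrightarrow>
     (\<forall>w. (\<forall>\<phi>\<in>fst S. sat R V w \<phi>) \<longrightarrow> (\<exists>\<psi>\<in>snd S. sat R V w \<psi>))"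

section \<open>Rules of CGTPDL (labels record the principal formula)\<close>

datatype ('p,'a) rl =
    RAx | RBot
  | RImpL "('p,'a) fm" "('p,'a) fm" | RImpR "('p,'a) fm" "('p,'a) fm"
  | RWk | RCut "('p,'a) fm"
  | RBox "('p,'a) prog" "('p,'a) fm" | RBoxC "('p,'a) prog" "('p,'a) fm"
  | RSeqL "('p,'a) prog" "('p,'a) prog" "('p,'a) fm"
  | RSeqR "('p,'a) prog" "('p,'a) prog" "('p,'a) fm"
  | RChoiceL "('p,'a) prog" "('p,'a) prog" "('p,'a) fm"
  | RChoiceR "('p,'a) prog" "('p,'a) prog" "('p,'a) fm"
  | RStarL "('p,'a) prog" "('p,'a) fm"
  | RTestL "('p,'a) fm" "('p,'a) fm" | RTestR "('p,'a) fm" "('p,'a) fm"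
  | RCS "('p,'a) prog" "('p,'a) fm"

text \<open>rule_inst r prems concl: (prems, concl) is an instance of rule r,
  premises listed in the order of the paper.\<close>

fun rule_inst :: "('p,'a) rl \<Rightarrow> ('p,'a) sequent list \<Rightarrow> ('p,'a) sequent \<Rightarrow> bool" where
  "rule_inst RAx ps c = (ps = [] \<and> fst c \<inter> snd c \<noteq> {})"
| "rule_inst RBot ps c = (ps = [] \<and> Bot \<in> fst c)"
| "rule_inst (RImpL \<phi> \<psi>) ps c = (\<exists>\<Gamma> \<Delta>. c = (insert (Imp \<phi> \<psi>) \<Gamma>, \<Delta>) \<and>
      ps = [(\<Gamma>, insert \<phi> \<Delta>), (insert \<psi> \<Gamma>, \<Delta>)])"
| "rule_inst (RImpR \<phi> \<psi>) ps c = (\<exists>\<Gamma> \<Delta>. c = (\<Gamma>, insert (Imp \<phi> \<psi>) \<Delta>) \<and>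
      ps = [(insert \<phi> \<Gamma>, insert \<psi> \<Delta>)])"
| "rule_inst RWk ps c = (\<exists>\<Gamma> \<Delta>. ps = [(\<Gamma>, \<Delta>)] \<and> \<Gamma> \<subseteq> fst c \<and> \<Delta> \<subseteq> snd c)"
| "rule_inst (RCut \<phi>) ps c = (\<exists>\<Gamma> \<Delta>. c = (\<Gamma>, \<Delta>) \<and>
      ps = [(\<Gamma>, insert \<phi> \<Delta>), (insert \<phi> \<Gamma>, \<Delta>)])"
| "rule_inst (RBox \<pi> \<phi>) ps c = (\<exists>\<Gamma> \<Delta>. c = (Box \<pi> ` \<Gamma>, insert (Box \<pi> \<phi>) \<Delta>) \<and>
      ps = [(\<Gamma>, insert \<phi> (BoxC \<pi> ` \<Delta>))])"
| "rule_inst (RBoxC \<pi> \<phi>) ps c = (\<exists>\<Gamma> \<Delta>. c = (BoxC \<pi> ` \<Gamma>, insert (BoxC \<pi> \<phi>) \<Delta>) \<and>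
      ps = [(\<Gamma>, insert \<phi> (Box \<pi> ` \<Delta>))])"
| "rule_inst (RSeqL \<pi>0 \<pi>1 \<phi>) ps c = (\<exists>\<Gamma> \<Delta>. c = (insert (Box (Seq \<pi>0 \<pi>1) \<phi>) \<Gamma>, \<Delta>) \<and>
      ps = [(insert (Box \<pi>0 (Box \<pi>1 \<phi>)) \<Gamma>, \<Delta>)])"
| "rule_inst (RSeqR \<pi>0 \<pi>1 \<phi>) ps c = (\<exists>\<Gamma> \<Delta>. c = (\<Gamma>, insert (Box (Seq \<pi>0 \<pi>1) \<phi>) \<Delta>) \<and>
      ps = [(\<Gamma>, insert (Box \<pi>0 (Box \<pi>1 \<phi>)) \<Delta>)])"
| "rule_inst (RChoiceL \<pi>0 \<pi>1 \<phi>) ps c = (\<exists>\<Gamma> \<Delta>. c = (insert (Box (Choice \<pi>0 \<pi>1) \<phi>) \<Gamma>, \<Delta>) \<and>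
      ps = [(insert (Box \<pi>0 \<phi>) (insert (Box \<pi>1 \<phi>) \<Gamma>), \<Delta>)])"
| "rule_inst (RChoiceR \<pi>0 \<pi>1 \<phi>) ps c = (\<exists>\<Gamma> \<Delta>. c = (\<Gamma>, insert (Box (Choice \<pi>0 \<pi>1) \<phi>) \<Delta>) \<and>
      ps = [(\<Gamma>, insert (Box \<pi>0 \<phi>) \<Delta>), (\<Gamma>, insert (Box \<pi>1 \<phi>) \<Delta>)])"
| "rule_inst (RStarL \<pi> \<phi>) ps c = (\<exists>\<Gamma> \<Delta>. c = (insert (Box (Star \<pi>) \<phi>) \<Gamma>, \<Delta>) \<and>
      ps = [(insert \<phi> (insert (Box \<pi> (Box (Star \<pi>) \<phi>)) \<Gamma>), \<Delta>)])"
| "rule_inst (RTestL \<phi> \<psi>) ps c = (\<exists>\<Gamma> \<Delta>. c = (insert (Box (Test \<phi>) \<psi>) \<Gamma>, \<Delta>) \<and>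
      ps = [(\<Gamma>, insert \<phi> \<Delta>), (insert \<psi> \<Gamma>, \<Delta>)])"
| "rule_inst (RTestR \<phi> \<psi>) ps c = (\<exists>\<Gamma> \<Delta>. c = (\<Gamma>, insert (Box (Test \<phi>) \<psi>) \<Delta>) \<and>
      ps = [(insert \<phi> \<Gamma>, insert \<psi> \<Delta>)])"
| "rule_inst (RCS \<pi> \<phi>) ps c = (\<exists>\<Gamma> \<Delta>. c = (\<Gamma>, insert (Box (Star \<pi>) \<phi>) \<Delta>) \<and>
      ps = [(\<Gamma>, insert \<phi> \<Delta>), (\<Gamma>, insert (Box \<pi> (Box (Star \<pi>) \<phi>)) \<Delta>)])"

text \<open>trace_step r j tau tau': the trace may go from tau (in the conclusion of
  the rule instance r) to tau' (in its j-th premise, counting from 0).\<close>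

fun trace_step :: "('p,'a) rl \<Rightarrow> nat \<Rightarrow> ('p,'a) fm \<Rightarrow> ('p,'a) fm \<Rightarrow> bool" where
  "trace_step (RImpR \<phi> \<psi>) j \<tau> \<tau>' = (\<tau>' = \<tau> \<or> (\<tau> = Imp \<phi> \<psi> \<and> \<tau>' = \<psi>))"
| "trace_step (RSeqR \<pi>0 \<pi>1 \<phi>) j \<tau> \<tau>' =
     (\<tau>' = \<tau> \<or> (\<tau> = Box (Seq \<pi>0 \<pi>1) \<phi> \<and> \<tau>' = Box \<pi>0 (Box \<pi>1 \<phi>)))"
| "trace_step (RChoiceR \<pi>0 \<pi>1 \<phi>) j \<tau> \<tau>' =
     (\<tau>' = \<tau> \<or> (\<tau> = Box (Choice \<pi>0 \<pi>1) \<phi> \<and> \<tau>' = (if j = 0 then Box \<pi>0 \<phi> else Box \<pi>1 \<phi>)))"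
| "trace_step (RTestR \<phi> \<psi>) j \<tau> \<tau>' = (\<tau>' = \<tau> \<or> (\<tau> = Box (Test \<phi>) \<psi> \<and> \<tau>' = \<psi>))"
| "trace_step (RCS \<pi> \<phi>) j \<tau> \<tau>' =
     (\<tau>' = \<tau> \<or> (\<tau> = Box (Star \<pi>) \<phi> \<and> \<tau>' = (if j = 0 then \<phi> else Box \<pi> (Box (Star \<pi>) \<phi>))))"
| "trace_step (RBox \<pi> \<phi>) j \<tau> \<tau>' = (\<tau> = Box \<pi> \<phi> \<and> \<tau>' = \<phi>)"
| "trace_step (RBoxC \<pi> \<phi>) j \<tau> \<tau>' = (\<tau> = BoxC \<pi> \<phi> \<and> \<tau>' = \<phi>)"
| "trace_step _ j \<tau> \<tau>' = (\<tau>' = \<tau>)"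

fun progress :: "('p,'a) rl \<Rightarrow> nat \<Rightarrow> ('p,'a) fm \<Rightarrow> ('p,'a) fm \<Rightarrow> bool" where
  "progress (RCS \<pi> \<phi>) j \<tau> \<tau>' =
     (j = 1 \<and> \<tau> = Box (Star \<pi>) \<phi> \<and> \<tau>' = Box \<pi> (Box (Star \<pi>) \<phi>))"
| "progress _ j \<tau> \<tau>' = False"

text \<open>Inner nodes (and Ax/Bot leaves) carry a sequent, a rule label and the list of
  premise subtrees; a bud carries its sequent and the address (path of child
  indices from the root) of its companion.\<close>

datatype ('p,'a) ptree =
    Bud "('p,'a) sequent" "nat list"
  | Inf "('p,'a) sequent" "('p,'a) rl" "('p,'a) ptree list"

fun seq_of :: "('p,'a) ptree \<Rightarrow> ('p,'a) sequent" where
  "seq_of (Bud s c) = s"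
| "seq_of (Inf s r ts) = s"

fun subtree :: "('p,'a) ptree \<Rightarrow> nat list \<Rightarrow> ('p,'a) ptree option" where
  "subtree t [] = Some t"
| "subtree t (j # p) = (case t of
      Inf s r ts \<Rightarrow> (if j < length ts then subtree (ts ! j) p else None)
    | Bud s c \<Rightarrow> None)"

definition pre_proof :: "('p,'a) ptree \<Rightarrow> bool" where
  "pre_proof T \<longleftrightarrow>
     (\<forall>p s r ts. subtree T p = Some (Inf s r ts) \<longrightarrow>
         finite (fst s) \<and> finite (snd s) \<and> rule_inst r (map seq_of ts) s) \<and>
     (\<forall>p s c. subtree T p = Some (Bud s c) \<longrightarrow>
         (\<exists>r ts. ts \<noteq> [] \<and> subtree T c = Some (Inf s r ts)))"

text \<open>Derivation graph: vertices are addresses of non-bud nodes; an edge from p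
  via premise j goes to the j-th child, or to its companion if that child is a bud.\<close>

definition dg_edge :: "('p,'a) ptree \<Rightarrow> nat list \<Rightarrow> nat \<Rightarrow> nat list \<Rightarrow> bool" where
  "dg_edge T p j q \<longleftrightarrow>
     (\<exists>s r ts. subtree T p = Some (Inf s r ts) \<and> j < length ts \<and>
        (case ts ! j of Inf _ _ _ \<Rightarrow> q = p @ [j] | Bud _ c \<Rightarrow> q = c))"

definition node_seq :: "('p,'a) ptree \<Rightarrow> nat list \<Rightarrow> ('p,'a) sequent" where
  "node_seq T p = seq_of (the (subtree T p))"

definition node_rule :: "('p,'a) ptree \<Rightarrow> nat list \<Rightarrow> ('p,'a) rl" where
  "node_rule T p = (case the (subtree T p) of Inf s r ts \<Rightarrow> r | Bud s c \<Rightarrow> RAx)"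

definition global_trace_condition :: "('p,'a) ptree \<Rightarrow> bool" where
  "global_trace_condition T \<longleftrightarrow>
     (\<forall>ns ks. (\<forall>i. dg_edge T (ns i) (ks i) (ns (Suc i))) \<longrightarrow>
        (\<exists>m \<tau>. (\<forall>i\<ge>m. \<tau> i \<in> snd (node_seq T (ns i)) \<and>
                      trace_step (node_rule T (ns i)) (ks i) (\<tau> i) (\<tau> (Suc i))) \<and>
               (\<exists>\<^sub>\<infinity>i. m \<le> i \<and> progress (node_rule T (ns i)) (ks i) (\<tau> i) (\<tau> (Suc i)))))"

definition cgtpdl_proof :: "('p,'a) ptree \<Rightarrow> bool" where
  "cgtpdl_proof T \<longleftrightarrow> pre_proof T \<and> global_trace_condition T"

end

theory Submission
  imports Defs
begin

inductive fl :: "('a \<Rightarrow> ('w \<times> 'w) set) \<Rightarrow> ('w \<Rightarrow> 'p set) \<Rightarrow> nat \<Rightarrow> 'w \<Rightarrow> ('p,'a) fm \<Rightarrow> bool"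
  for R V where
  flBot: "fl R V n w Bot"
| flAtom: "p \<notin> V w \<Longrightarrow> fl R V n w (Atom p)"
| flImp: "sat R V w \<phi> \<Longrightarrow> fl R V m w \<psi> \<Longrightarrow> m < n \<Longrightarrow> fl R V n w (Imp \<phi> \<psi>)"
| flAt: "(w, v) \<in> R a \<Longrightarrow> fl R V m v \<phi> \<Longrightarrow> m < n \<Longrightarrow> fl R V n w (Box (At a) \<phi>)"
| flSeq: "fl R V m w (Box a (Box b \<phi>)) \<Longrightarrow> m < n \<Longrightarrow> fl R V n w (Box (Seq a b) \<phi>)"
| flCh0: "fl R V m w (Box a \<phi>) \<Longrightarrow> m < n \<Longrightarrow> fl R V n w (Box (Choice a b) \<phi>)"
| flCh1: "fl R V m w (Box b \<phi>) \<Longrightarrow> m < n \<Longrightarrow> fl R V n w (Box (Choice a b) \<phi>)"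
| flTest: "sat R V w \<phi> \<Longrightarrow> fl R V m w \<psi> \<Longrightarrow> m < n \<Longrightarrow> fl R V n w (Box (Test \<phi>) \<psi>)"
| flSt0: "fl R V m w \<phi> \<Longrightarrow> m < n \<Longrightarrow> fl R V n w (Box (Star a) \<phi>)"
| flSt1: "fl R V m w (Box a (Box (Star a) \<phi>)) \<Longrightarrow> m < n \<Longrightarrow> fl R V n w (Box (Star a) \<phi>)"
| flC: "(v, w) \<in> rel R V a \<Longrightarrow> fl R V m v \<phi> \<Longrightarrow> m < n \<Longrightarrow> fl R V n w (BoxC a \<phi>)"

lemma fl_mono: "fl R V m w \<tau> \<Longrightarrow> m \<le> n \<Longrightarrow> fl R V n w \<tau>"
proof (induction arbitrary: n rule: fl.induct)
qed (auto intro: fl.intros dest: order.strict_trans2)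

lemma fl_sound: "fl R V n w \<tau> \<Longrightarrow> \<not> sat R V w \<tau>"
proof (induction rule: fl.induct)
  case (flSt1 m w a \<phi> n)
  then obtain v where "(w,v) \<in> rel R V a" "\<not> sat R V v (Box (Star a) \<phi>)" by auto
  then obtain u where "(v,u) \<in> (rel R V a)\<^sup>*" "\<not> sat R V u \<phi>" by auto
  then show ?case using \<open>(w,v) \<in> rel R V a\<close>
    by (auto intro: converse_rtrancl_into_rtrancl)
qed auto

lemma prog_compl: "(w, v) \<in> rel R V \<pi> \<Longrightarrow> fl R V n v \<psi> \<Longrightarrow> \<exists>k. fl R V k w (Box \<pi> \<psi>)"
proof (induction \<pi> arbitrary: w v n \<psi> rule: prog.induct[where ?P1.0="\<lambda>_. True"])
  case (At x)
  then show ?case by (auto intro: fl.intros)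
next
  case (Seq \<pi>1 \<pi>2)
  then obtain u where "(w,u) \<in> rel R V \<pi>1" "(u,v) \<in> rel R V \<pi>2" by auto
  with Seq obtain k where "fl R V k u (Box \<pi>2 \<psi>)" by blast
  with Seq \<open>(w,u) \<in> rel R V \<pi>1\<close> obtain k' where "fl R V k' w (Box \<pi>1 (Box \<pi>2 \<psi>))" by blast
  then show ?case by (auto intro: fl.intros)
next
  case (Choice \<pi>1 \<pi>2)
  then have "(w,v) \<in> rel R V \<pi>1 \<or> (w,v) \<in> rel R V \<pi>2" by simp
  then show ?case
  proof
    assume "(w,v) \<in> rel R V \<pi>1"
    with Choice obtain k where "fl R V k w (Box \<pi>1 \<psi>)" by blast
    then show ?case using flCh0[of R V k w \<pi>1 \<psi> "Suc k" \<pi>2] by blast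
  next
    assume "(w,v) \<in> rel R V \<pi>2"
    with Choice obtain k where "fl R V k w (Box \<pi>2 \<psi>)" by blast
    then show ?case using flCh1[of R V k w \<pi>2 \<psi> "Suc k" \<pi>1] by blast
  qed
next
  case (Star \<pi>)
  from Star.prems(1) have "(w,v) \<in> (rel R V \<pi>)\<^sup>*" by simp
  then show ?case
  proof (induction rule: converse_rtrancl_induct)
    case base
    then show ?case using Star.prems by (auto intro: fl.intros)
  next
    case (step y z)
    then obtain k where "fl R V k z (Box (Star \<pi>) \<psi>)" by blast
    with Star.IH step obtain k' where "fl R V k' y (Box \<pi> (Box (Star \<pi>) \<psi>))" by blast
    then show ?case by (auto intro: fl.intros)
  qed
next
  case (Test x)
  then show ?case by (auto intro: fl.intros)
qed simp_all

lemma fm_compl: "\<not> sat R V w \<tau> \<Longrightarrow> \<exists>n. fl R V n w \<tau>"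
proof (induction \<tau> arbitrary: w rule: fm.induct[where ?P2.0="\<lambda>_. True"])
  case (Imp \<tau>1 \<tau>2)
  then obtain n where "fl R V n w \<tau>2" "sat R V w \<tau>1" by auto
  then show ?case using flImp[of R V w \<tau>1 n \<tau>2 "Suc n"] by blast
next
  case (Box \<pi> \<tau>)
  then obtain v where "(w,v) \<in> rel R V \<pi>" "\<not> sat R V v \<tau>" by auto
  with Box.IH obtain n where "fl R V n v \<tau>" by blast
  then show ?case using prog_compl[OF \<open>(w,v) \<in> rel R V \<pi>\<close>] by blast
next
  case (BoxC \<pi> \<tau>)
  then obtain v where "(v,w) \<in> rel R V \<pi>" "\<not> sat R V v \<tau>" by auto
  with BoxC.IH obtain n where "fl R V n v \<tau>" by blast
  with \<open>(v,w) \<in> rel R V \<pi>\<close> show ?case by (auto intro: fl.intros)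
qed (auto intro: fl.intros)

lemma fl_box: "fl R V n w (Box \<pi> \<phi>) \<Longrightarrow> \<exists>v. (w, v) \<in> rel R V \<pi> \<and> fl R V n v \<phi>"
proof (induction n arbitrary: w \<pi> \<phi> rule: less_induct)
  case (less n)
  from less.prems show ?case
  proof (cases rule: fl.cases)
    case (flAt v a m)
    then show ?thesis using fl_mono[of R V m v \<phi> n] by auto
  next
    case (flSeq m a b)
    then obtain u where u: "(w,u) \<in> rel R V a" "fl R V m u (Box b \<phi>)" using less.IH by blast
    then obtain v where "(u,v) \<in> rel R V b" "fl R V m v \<phi>" using less.IH flSeq by blast
    then show ?thesis using u flSeq fl_mono[of R V m v \<phi> n] by auto
  next
    case (flCh0 m a b)
    then show ?thesis using less.IH fl_mono by fastforce
  next
    case (flCh1 m b a)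
    then show ?thesis using less.IH fl_mono by fastforce
  next
    case (flTest \<psi> m)
    then show ?thesis using fl_mono[of R V m w \<phi> n] by auto
  next
    case (flSt0 m a)
    then show ?thesis using fl_mono[of R V m w \<phi> n] by auto
  next
    case (flSt1 m a)
    then obtain u where u: "(w,u) \<in> rel R V a" "fl R V m u (Box (Star a) \<phi>)" using less.IH by blast
    then obtain v where "(u,v) \<in> (rel R V a)\<^sup>*" "fl R V m v \<phi>" using less.IH flSt1 by fastforce
    then show ?thesis using u flSt1 fl_mono[of R V m v \<phi> n]
      by (auto intro: converse_rtrancl_into_rtrancl)
  qed
qed

definition fals :: "('a \<Rightarrow> ('w \<times> 'w) set) \<Rightarrow> ('w \<Rightarrow> 'p set) \<Rightarrow> 'w \<Rightarrow> ('p,'a) sequent \<Rightarrow> bool" where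
  "fals R V w s \<longleftrightarrow> (\<forall>\<phi>\<in>fst s. sat R V w \<phi>) \<and> (\<forall>\<psi>\<in>snd s. \<not> sat R V w \<psi>)"

definition hh :: "('a \<Rightarrow> ('w \<times> 'w) set) \<Rightarrow> ('w \<Rightarrow> 'p set) \<Rightarrow> 'w \<Rightarrow> ('p,'a) fm \<Rightarrow> nat" where
  "hh R V w \<tau> = (LEAST n. fl R V n w \<tau>)"

definition good :: "('a \<Rightarrow> ('w \<times> 'w) set) \<Rightarrow> ('w \<Rightarrow> 'p set) \<Rightarrow> ('p,'a) rl \<Rightarrow> nat \<Rightarrow> 'w \<Rightarrow> 'w
   \<Rightarrow> ('p,'a) sequent \<Rightarrow> ('p,'a) sequent \<Rightarrow> bool" where
  "good R V r j w w' s s' \<longleftrightarrow> (\<forall>\<tau>\<in>snd s. \<forall>\<tau>'\<in>snd s'. trace_step r j \<tau> \<tau>' \<longrightarrow>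
      hh R V w' \<tau>' \<le> hh R V w \<tau> \<and> (progress r j \<tau> \<tau>' \<longrightarrow> hh R V w' \<tau>' < hh R V w \<tau>))"

lemma hh_fl: "\<not> sat R V w \<tau> \<Longrightarrow> fl R V (hh R V w \<tau>) w \<tau>"
  unfolding hh_def using fm_compl by (metis LeastI_ex)

lemma hh_le: "fl R V n w \<tau> \<Longrightarrow> hh R V w \<tau> \<le> n"
  unfolding hh_def by (rule Least_le)

lemma inv_Imp: "\<not> sat R V w (Imp \<phi> \<psi>) \<Longrightarrow> hh R V w \<psi> < hh R V w (Imp \<phi> \<psi>)"
proof -
  assume a: "\<not> sat R V w (Imp \<phi> \<psi>)"
  from hh_fl[OF a] obtain m where "fl R V m w \<psi>" "m < hh R V w (Imp \<phi> \<psi>)"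
    by (cases rule: fl.cases) auto
  then show ?thesis using hh_le by (meson le_less_trans)
qed

lemma inv_Seq: "\<not> sat R V w (Box (Seq a b) \<phi>) \<Longrightarrow> hh R V w (Box a (Box b \<phi>)) < hh R V w (Box (Seq a b) \<phi>)"
proof -
  assume a: "\<not> sat R V w (Box (Seq a b) \<phi>)"
  from hh_fl[OF a] obtain m where "fl R V m w (Box a (Box b \<phi>))" "m < hh R V w (Box (Seq a b) \<phi>)"
    by (cases rule: fl.cases) auto
  then show ?thesis using hh_le by (meson le_less_trans)
qed

lemma inv_Test: "\<not> sat R V w (Box (Test \<phi>) \<psi>) \<Longrightarrow> hh R V w \<psi> < hh R V w (Box (Test \<phi>) \<psi>)"
proof -
  assume a: "\<not> sat R V w (Box (Test \<phi>) \<psi>)"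
  from hh_fl[OF a] obtain m where "fl R V m w \<psi>" "m < hh R V w (Box (Test \<phi>) \<psi>)"
    by (cases rule: fl.cases) auto
  then show ?thesis using hh_le by (meson le_less_trans)
qed

lemma inv_Choice: "\<not> sat R V w (Box (Choice a b) \<phi>) \<Longrightarrow>
   (fl R V (hh R V w (Box a \<phi>)) w (Box a \<phi>) \<and> hh R V w (Box a \<phi>) < hh R V w (Box (Choice a b) \<phi>)) \<or>
   (fl R V (hh R V w (Box b \<phi>)) w (Box b \<phi>) \<and> hh R V w (Box b \<phi>) < hh R V w (Box (Choice a b) \<phi>))"
proof -
  assume a: "\<not> sat R V w (Box (Choice a b) \<phi>)"
  from hh_fl[OF a] obtain m where "fl R V m w (Box a \<phi>) \<or> fl R V m w (Box b \<phi>)" "m < hh R V w (Box (Choice a b) \<phi>)"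
    by (cases rule: fl.cases) auto
  then show ?thesis using hh_le fl_sound hh_fl by (meson le_less_trans)
qed

lemma inv_Star: "\<not> sat R V w (Box (Star a) \<phi>) \<Longrightarrow>
   (fl R V (hh R V w \<phi>) w \<phi> \<and> hh R V w \<phi> < hh R V w (Box (Star a) \<phi>)) \<or>
   (fl R V (hh R V w (Box a (Box (Star a) \<phi>))) w (Box a (Box (Star a) \<phi>)) \<and>
     hh R V w (Box a (Box (Star a) \<phi>)) < hh R V w (Box (Star a) \<phi>))"
proof -
  assume a: "\<not> sat R V w (Box (Star a) \<phi>)"
  from hh_fl[OF a] obtain m where "fl R V m w \<phi> \<or> fl R V m w (Box a (Box (Star a) \<phi>))" "m < hh R V w (Box (Star a) \<phi>)"
    by (cases rule: fl.cases) auto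
  then show ?thesis using hh_le fl_sound hh_fl by (meson le_less_trans)
qed

lemma inv_BoxC: "\<not> sat R V w (BoxC a \<phi>) \<Longrightarrow>
   \<exists>v. (v, w) \<in> rel R V a \<and> fl R V (hh R V v \<phi>) v \<phi> \<and> hh R V v \<phi> < hh R V w (BoxC a \<phi>)"
proof -
  assume a: "\<not> sat R V w (BoxC a \<phi>)"
  from hh_fl[OF a] obtain m v where "(v, w) \<in> rel R V a" "fl R V m v \<phi>" "m < hh R V w (BoxC a \<phi>)"
    by (cases rule: fl.cases) auto
  then show ?thesis using hh_le fl_sound hh_fl by (meson le_less_trans)
qed

lemma inv_Box: "\<not> sat R V w (Box a \<phi>) \<Longrightarrow>
   \<exists>v. (w, v) \<in> rel R V a \<and> fl R V (hh R V v \<phi>) v \<phi> \<and> hh R V v \<phi> \<le> hh R V w (Box a \<phi>)"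
proof -
  assume a: "\<not> sat R V w (Box a \<phi>)"
  from fl_box[OF hh_fl[OF a]] obtain v where "(w, v) \<in> rel R V a" "fl R V (hh R V w (Box a \<phi>)) v \<phi>"
    by blast
  then show ?thesis using hh_le fl_sound hh_fl by meson
qed

lemma good_id: "(\<And>\<tau> \<tau>'. trace_step r j \<tau> \<tau>' \<Longrightarrow> \<tau>' = \<tau>) \<Longrightarrow> (\<And>\<tau> \<tau>'. \<not> progress r j \<tau> \<tau>')
   \<Longrightarrow> good R V r j w w s s'"
  unfolding good_def by auto

lemma step:
  assumes ri: "rule_inst r ps s" and f: "fals R V w s"
  shows "\<exists>j w'. j < length ps \<and> fals R V w' (ps ! j) \<and> good R V r j w w' s (ps ! j)"
proof (cases r)
  case RAx
  then show ?thesis using ri f by (auto simp: fals_def)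
next
  case RBot
  then show ?thesis using ri f by (auto simp: fals_def)
next
  case (RImpL \<phi> \<psi>)
  then obtain \<Gamma> \<Delta> where s: "s = (insert (Imp \<phi> \<psi>) \<Gamma>, \<Delta>)" and ps: "ps = [(\<Gamma>, insert \<phi> \<Delta>), (insert \<psi> \<Gamma>, \<Delta>)]"
    using ri by auto
  have g: "good R V r j w w s s'" for j s' by (rule good_id) (auto simp: RImpL)
  show ?thesis
  proof (cases "sat R V w \<phi>")
    case True
    then have "fals R V w (ps ! 1)" using f s ps by (auto simp: fals_def)
    then show ?thesis using g ps by force
  next
    case False
    then have "fals R V w (ps ! 0)" using f s ps by (auto simp: fals_def)
    then show ?thesis using g ps by force
  qed
next
  case (RImpR \<phi> \<psi>)
  then obtain \<Gamma> \<Delta> where s: "s = (\<Gamma>, insert (Imp \<phi> \<psi>) \<Delta>)" and ps: "ps = [(insert \<phi> \<Gamma>, insert \<psi> \<Delta>)]"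
    using ri by auto
  have "fals R V w (ps ! 0)" using f s ps by (auto simp: fals_def)
  moreover have "good R V r 0 w w s (ps ! 0)"
    using inv_Imp[of R V w \<phi> \<psi>] f s by (auto simp: good_def RImpR fals_def)
  ultimately show ?thesis using ps by force
next
  case RWk
  then obtain \<Gamma> \<Delta> where ps: "ps = [(\<Gamma>, \<Delta>)]" "\<Gamma> \<subseteq> fst s" "\<Delta> \<subseteq> snd s"
    using ri by auto
  have "fals R V w (ps ! 0)" using f ps by (auto simp: fals_def)
  moreover have "good R V r 0 w w s (ps ! 0)" by (rule good_id) (auto simp: RWk)
  ultimately show ?thesis using ps by force
next
  case (RCut \<phi>)
  then obtain \<Gamma> \<Delta> where s: "s = (\<Gamma>, \<Delta>)" and ps: "ps = [(\<Gamma>, insert \<phi> \<Delta>), (insert \<phi> \<Gamma>, \<Delta>)]"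
    using ri by auto
  have g: "good R V r j w w s s'" for j s' by (rule good_id) (auto simp: RCut)
  show ?thesis
  proof (cases "sat R V w \<phi>")
    case True
    then have "fals R V w (ps ! 1)" using f s ps by (auto simp: fals_def)
    then show ?thesis using g ps by force
  next
    case False
    then have "fals R V w (ps ! 0)" using f s ps by (auto simp: fals_def)
    then show ?thesis using g ps by force
  qed
next
  case (RBox \<pi> \<phi>)
  then obtain \<Gamma> \<Delta> where s: "s = (Box \<pi> ` \<Gamma>, insert (Box \<pi> \<phi>) \<Delta>)" and ps: "ps = [(\<Gamma>, insert \<phi> (BoxC \<pi> ` \<Delta>))]"
    using ri by auto
  have "\<not> sat R V w (Box \<pi> \<phi>)" using f s by (auto simp: fals_def)
  from inv_Box[OF this] obtain v where v: "(w, v) \<in> rel R V \<pi>" "fl R V (hh R V v \<phi>) v \<phi>"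
    "hh R V v \<phi> \<le> hh R V w (Box \<pi> \<phi>)" by blast
  have "fals R V v (ps ! 0)" using f s ps v fl_sound by (fastforce simp: fals_def)
  moreover have "good R V r 0 w v s (ps ! 0)"
    using v by (auto simp: good_def RBox)
  ultimately show ?thesis using ps by force
next
  case (RBoxC \<pi> \<phi>)
  then obtain \<Gamma> \<Delta> where s: "s = (BoxC \<pi> ` \<Gamma>, insert (BoxC \<pi> \<phi>) \<Delta>)" and ps: "ps = [(\<Gamma>, insert \<phi> (Box \<pi> ` \<Delta>))]"
    using ri by auto
  have "\<not> sat R V w (BoxC \<pi> \<phi>)" using f s by (auto simp: fals_def)
  from inv_BoxC[OF this] obtain v where v: "(v, w) \<in> rel R V \<pi>" "fl R V (hh R V v \<phi>) v \<phi>"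
    "hh R V v \<phi> < hh R V w (BoxC \<pi> \<phi>)" by blast
  have "fals R V v (ps ! 0)" using f s ps v fl_sound by (fastforce simp: fals_def)
  moreover have "good R V r 0 w v s (ps ! 0)"
    using v by (auto simp: good_def RBoxC)
  ultimately show ?thesis using ps by force
next
  case (RSeqL \<pi>0 \<pi>1 \<phi>)
  then obtain \<Gamma> \<Delta> where s: "s = (insert (Box (Seq \<pi>0 \<pi>1) \<phi>) \<Gamma>, \<Delta>)" and ps: "ps = [(insert (Box \<pi>0 (Box \<pi>1 \<phi>)) \<Gamma>, \<Delta>)]"
    using ri by auto
  have "fals R V w (ps ! 0)" using f s ps by (auto simp: fals_def)
  moreover have "good R V r 0 w w s (ps ! 0)" by (rule good_id) (auto simp: RSeqL)
  ultimately show ?thesis using ps by force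
next
  case (RSeqR \<pi>0 \<pi>1 \<phi>)
  then obtain \<Gamma> \<Delta> where s: "s = (\<Gamma>, insert (Box (Seq \<pi>0 \<pi>1) \<phi>) \<Delta>)" and ps: "ps = [(\<Gamma>, insert (Box \<pi>0 (Box \<pi>1 \<phi>)) \<Delta>)]"
    using ri by auto
  have "fals R V w (ps ! 0)" using f s ps by (auto simp: fals_def)
  moreover have "good R V r 0 w w s (ps ! 0)"
    using inv_Seq[of R V w \<pi>0 \<pi>1 \<phi>] f s by (auto simp: good_def RSeqR fals_def)
  ultimately show ?thesis using ps by force
next
  case (RChoiceL \<pi>0 \<pi>1 \<phi>)
  then obtain \<Gamma> \<Delta> where s: "s = (insert (Box (Choice \<pi>0 \<pi>1) \<phi>) \<Gamma>, \<Delta>)" and ps: "ps = [(insert (Box \<pi>0 \<phi>) (insert (Box \<pi>1 \<phi>) \<Gamma>), \<Delta>)]"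
    using ri by auto
  have "fals R V w (ps ! 0)" using f s ps by (auto simp: fals_def)
  moreover have "good R V r 0 w w s (ps ! 0)" by (rule good_id) (auto simp: RChoiceL)
  ultimately show ?thesis using ps by force
next
  case (RChoiceR \<pi>0 \<pi>1 \<phi>)
  then obtain \<Gamma> \<Delta> where s: "s = (\<Gamma>, insert (Box (Choice \<pi>0 \<pi>1) \<phi>) \<Delta>)" and ps: "ps = [(\<Gamma>, insert (Box \<pi>0 \<phi>) \<Delta>), (\<Gamma>, insert (Box \<pi>1 \<phi>) \<Delta>)]"
    using ri by auto
  have n: "\<not> sat R V w (Box (Choice \<pi>0 \<pi>1) \<phi>)" using f s by (auto simp: fals_def)
  from inv_Choice[OF n] show ?thesis
  proof
    assume a: "fl R V (hh R V w (Box \<pi>0 \<phi>)) w (Box \<pi>0 \<phi>) \<and> hh R V w (Box \<pi>0 \<phi>) < hh R V w (Box (Choice \<pi>0 \<pi>1) \<phi>)"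
    have nb: "\<not> sat R V w (Box \<pi>0 \<phi>)" by (rule fl_sound[OF conjunct1[OF a]])
    have "fals R V w (ps ! 0)" using f s ps nb unfolding fals_def by (simp del: sat.simps)
    moreover have "good R V r 0 w w s (ps ! 0)" using a by (auto simp: good_def RChoiceR)
    ultimately show ?thesis using ps by force
  next
    assume a: "fl R V (hh R V w (Box \<pi>1 \<phi>)) w (Box \<pi>1 \<phi>) \<and> hh R V w (Box \<pi>1 \<phi>) < hh R V w (Box (Choice \<pi>0 \<pi>1) \<phi>)"
    have nb: "\<not> sat R V w (Box \<pi>1 \<phi>)" by (rule fl_sound[OF conjunct1[OF a]])
    have "fals R V w (ps ! 1)" using f s ps nb unfolding fals_def by (simp del: sat.simps)
    moreover have "good R V r 1 w w s (ps ! 1)" using a by (auto simp: good_def RChoiceR)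
    ultimately show ?thesis using ps by force
  qed
next
  case (RStarL \<pi> \<phi>)
  then obtain \<Gamma> \<Delta> where s: "s = (insert (Box (Star \<pi>) \<phi>) \<Gamma>, \<Delta>)" and ps: "ps = [(insert \<phi> (insert (Box \<pi> (Box (Star \<pi>) \<phi>)) \<Gamma>), \<Delta>)]"
    using ri by auto
  have "fals R V w (ps ! 0)" using f s ps
    by (auto simp: fals_def intro: converse_rtrancl_into_rtrancl)
  moreover have "good R V r 0 w w s (ps ! 0)" by (rule good_id) (auto simp: RStarL)
  ultimately show ?thesis using ps by force
next
  case (RTestL \<phi> \<psi>)
  then obtain \<Gamma> \<Delta> where s: "s = (insert (Box (Test \<phi>) \<psi>) \<Gamma>, \<Delta>)" and ps: "ps = [(\<Gamma>, insert \<phi> \<Delta>), (insert \<psi> \<Gamma>, \<Delta>)]"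
    using ri by auto
  have g: "good R V r j w w s s'" for j s' by (rule good_id) (auto simp: RTestL)
  show ?thesis
  proof (cases "sat R V w \<phi>")
    case True
    then have "fals R V w (ps ! 1)" using f s ps by (auto simp: fals_def)
    then show ?thesis using g ps by force
  next
    case False
    then have "fals R V w (ps ! 0)" using f s ps by (auto simp: fals_def)
    then show ?thesis using g ps by force
  qed
next
  case (RTestR \<phi> \<psi>)
  then obtain \<Gamma> \<Delta> where s: "s = (\<Gamma>, insert (Box (Test \<phi>) \<psi>) \<Delta>)" and ps: "ps = [(insert \<phi> \<Gamma>, insert \<psi> \<Delta>)]"
    using ri by auto
  have "fals R V w (ps ! 0)" using f s ps by (auto simp: fals_def)
  moreover have "good R V r 0 w w s (ps ! 0)"
    using inv_Test[of R V w \<phi> \<psi>] f s by (auto simp: good_def RTestR fals_def)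
  ultimately show ?thesis using ps by force
next
  case (RCS \<pi> \<phi>)
  then obtain \<Gamma> \<Delta> where s: "s = (\<Gamma>, insert (Box (Star \<pi>) \<phi>) \<Delta>)" and ps: "ps = [(\<Gamma>, insert \<phi> \<Delta>), (\<Gamma>, insert (Box \<pi> (Box (Star \<pi>) \<phi>)) \<Delta>)]"
    using ri by auto
  have n: "\<not> sat R V w (Box (Star \<pi>) \<phi>)" using f s by (auto simp: fals_def)
  from inv_Star[OF n] show ?thesis
  proof
    assume a: "fl R V (hh R V w \<phi>) w \<phi> \<and> hh R V w \<phi> < hh R V w (Box (Star \<pi>) \<phi>)"
    have nb: "\<not> sat R V w \<phi>" by (rule fl_sound[OF conjunct1[OF a]])
    have "fals R V w (ps ! 0)" using f s ps nb unfolding fals_def by (simp del: sat.simps)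
    moreover have "good R V r 0 w w s (ps ! 0)" using a by (auto simp: good_def RCS)
    ultimately show ?thesis using ps by force
  next
    assume a: "fl R V (hh R V w (Box \<pi> (Box (Star \<pi>) \<phi>))) w (Box \<pi> (Box (Star \<pi>) \<phi>)) \<and>
      hh R V w (Box \<pi> (Box (Star \<pi>) \<phi>)) < hh R V w (Box (Star \<pi>) \<phi>)"
    have nb: "\<not> sat R V w (Box \<pi> (Box (Star \<pi>) \<phi>))" by (rule fl_sound[OF conjunct1[OF a]])
    have "fals R V w (ps ! 1)" using f s ps nb unfolding fals_def by (simp del: sat.simps)
    moreover have "good R V r 1 w w s (ps ! 1)" using a by (auto simp: good_def RCS)
    ultimately show ?thesis using ps by force
  qed
qed

lemma subtree_snoc: "subtree T p = Some (Inf s r ts) \<Longrightarrow> j < length ts \<Longrightarrow> subtree T (p @ [j]) = Some (ts ! j)"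
proof (induction p arbitrary: T)
  case Nil
  then show ?case by simp
next
  case (Cons a p)
  then show ?case by (cases T) (auto split: if_splits)
qed

lemma no_inf_descent:
  fixes g :: "nat \<Rightarrow> nat"
  assumes mono: "\<forall>i\<ge>m. g (Suc i) \<le> g i" and inf: "\<exists>\<^sub>\<infinity>i. m \<le> i \<and> g (Suc i) < g i"
  shows False
proof -
  have anti: "g j \<le> g i" if "m \<le> i" "i \<le> j" for i j
    using that(2)
  proof (induction j rule: dec_induct)
    case base then show ?case by simp
  next
    case (step n) then show ?case using mono that(1) by (meson le_trans)
  qed
  have "\<exists>i\<ge>m. g i + k \<le> g m" for k
  proof (induction k)
    case 0 then show ?case by auto
  next
    case (Suc k)
    then obtain i where i: "i \<ge> m" "g i + k \<le> g m" by blast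
    from inf obtain n where n: "n > i" "m \<le> n" "g (Suc n) < g n"
      unfolding INFM_nat by blast
    have "g n \<le> g i" using anti[of i n] i n by simp
    then show ?case using i n by (intro exI[of _ "Suc n"]) auto
  qed
  from this[of "Suc (g m)"] show False by auto
qed

theorem mainTheorem7:
  fixes T :: "('p,'a) ptree"
    and R :: "'a \<Rightarrow> ('w \<times> 'w) set" and V :: "'w \<Rightarrow> 'p set"
  assumes "cgtpdl_proof T"
    and "subtree T p = Some t"
  shows "valid_seq R V (seq_of t)"
proof (rule ccontr)
  assume nv: "\<not> valid_seq R V (seq_of t)"
  have pp: "pre_proof T" and gtc: "global_trace_condition T" using assms(1) by (auto simp: cgtpdl_proof_def)
  from pp have ppi: "\<And>p s r ts. subtree T p = Some (Inf s r ts) \<Longrightarrow> rule_inst r (map seq_of ts) s"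
    and ppb: "\<And>p s c. subtree T p = Some (Bud s c) \<Longrightarrow> \<exists>r ts. ts \<noteq> [] \<and> subtree T c = Some (Inf s r ts)"
    unfolding pre_proof_def by blast+
  from nv obtain w0 where w0: "fals R V w0 (seq_of t)" by (auto simp: valid_seq_def fals_def)
  define inv where "inv q w \<longleftrightarrow> (\<exists>s r ts. subtree T q = Some (Inf s r ts) \<and> fals R V w s)" for q w
  obtain p0 where p0: "inv p0 w0"
  proof (cases t)
    case (Bud s c)
    then show ?thesis using ppb[of p s c] assms(2) w0 that unfolding inv_def by fastforce
  next
    case (Inf s r ts)
    then show ?thesis using assms(2) w0 that unfolding inv_def by fastforce
  qed
  have nxt: "\<exists>j q' w'. dg_edge T q j q' \<and> inv q' w' \<and>
      good R V (node_rule T q) j w w' (node_seq T q) (node_seq T q')" if "inv q w" for q w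
  proof -
    from that obtain s r ts where st: "subtree T q = Some (Inf s r ts)" "fals R V w s"
      unfolding inv_def by blast
    from step[OF ppi[OF st(1)] st(2)] obtain j w' where
      j: "j < length ts" "fals R V w' (seq_of (ts ! j))" "good R V r j w w' s (seq_of (ts ! j))"
      by auto
    have nr: "node_rule T q = r" "node_seq T q = s" using st by (auto simp: node_rule_def node_seq_def)
    show ?thesis
    proof (cases "ts ! j")
      case (Bud s' c)
      then have sb: "subtree T (q @ [j]) = Some (Bud s' c)" using subtree_snoc[OF st(1) j(1)] by simp
      from ppb[OF sb] obtain r2 ts2 where c: "subtree T c = Some (Inf s' r2 ts2)" by blast
      have "dg_edge T q j c" using st j Bud by (auto simp: dg_edge_def)
      moreover have "inv c w'" using c j Bud unfolding inv_def by auto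
      moreover have "node_seq T c = s'" using c by (simp add: node_seq_def)
      ultimately show ?thesis using j nr Bud by auto
    next
      case (Inf s' r' ts')
      then have sb: "subtree T (q @ [j]) = Some (Inf s' r' ts')" using subtree_snoc[OF st(1) j(1)] by simp
      have "dg_edge T q j (q @ [j])" using st j Inf by (auto simp: dg_edge_def)
      moreover have "inv (q @ [j]) w'" using sb j Inf unfolding inv_def by auto
      moreover have "node_seq T (q @ [j]) = s'" using sb by (simp add: node_seq_def)
      ultimately show ?thesis using j nr Inf by auto
    qed
  qed
  have "\<forall>x. \<exists>y. inv (fst x) (snd x) \<longrightarrow> dg_edge T (fst x) (fst y) (fst (snd y)) \<and> inv (fst (snd y)) (snd (snd y)) \<and>
      good R V (node_rule T (fst x)) (fst y) (snd x) (snd (snd y)) (node_seq T (fst x)) (node_seq T (fst (snd y)))"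
    using nxt by fastforce
  then obtain F where F: "\<And>x. inv (fst x) (snd x) \<Longrightarrow> dg_edge T (fst x) (fst (F x)) (fst (snd (F x))) \<and> inv (fst (snd (F x))) (snd (snd (F x))) \<and>
      good R V (node_rule T (fst x)) (fst (F x)) (snd x) (snd (snd (F x))) (node_seq T (fst x)) (node_seq T (fst (snd (F x))))"
    by metis
  define st where "st = rec_nat (p0, w0) (\<lambda>_ x. snd (F x))"
  define ns where "ns i = fst (st i)" for i
  define ws where "ws i = snd (st i)" for i
  define ks where "ks i = fst (F (st i))" for i
  have st_Suc: "st (Suc i) = snd (F (st i))" for i by (simp add: st_def)
  have invs: "inv (ns i) (ws i)" for i
  proof (induction i)
    case 0 then show ?case using p0 by (simp add: ns_def ws_def st_def)
  next
    case (Suc i) then show ?case using F[of "st i"] by (simp add: ns_def ws_def st_Suc)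
  qed
  have edges: "dg_edge T (ns i) (ks i) (ns (Suc i))" for i
    using F[of "st i"] invs[of i] by (simp add: ns_def ws_def ks_def st_Suc)
  have goods: "good R V (node_rule T (ns i)) (ks i) (ws i) (ws (Suc i)) (node_seq T (ns i)) (node_seq T (ns (Suc i)))" for i
    using F[of "st i"] invs[of i] by (simp add: ns_def ws_def ks_def st_Suc)
  from gtc edges obtain m \<tau> where
    tr: "\<forall>i\<ge>m. \<tau> i \<in> snd (node_seq T (ns i)) \<and> trace_step (node_rule T (ns i)) (ks i) (\<tau> i) (\<tau> (Suc i))"
    and pr: "\<exists>\<^sub>\<infinity>i. m \<le> i \<and> progress (node_rule T (ns i)) (ks i) (\<tau> i) (\<tau> (Suc i))"
    unfolding global_trace_condition_def by blast
  define g where "g i = hh R V (ws i) (\<tau> i)" for i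
  have gm: "\<forall>i\<ge>m. g (Suc i) \<le> g i"
    using tr goods unfolding good_def g_def by (meson le_SucI)
  have gp: "\<exists>\<^sub>\<infinity>i. m \<le> i \<and> g (Suc i) < g i"
    using pr
  proof (rule INFM_mono)
    fix i assume "m \<le> i \<and> progress (node_rule T (ns i)) (ks i) (\<tau> i) (\<tau> (Suc i))"
    then show "m \<le> i \<and> g (Suc i) < g i"
      using tr goods[of i] unfolding good_def g_def by (meson le_SucI)
  qed
  show False using no_inf_descent[OF gm gp] .
qed

end
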